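(* Let $\pi_k$ be a current policy, let $\pi$ be any policy, and let $\pi_{\mathrm{ref}}$ be a reference policy. Then $$J(\pi)-J(\pi_k)\;\ge\;\frac{1}{1-\gamma}\,\mathbb E_{(s,a)\sim d^{\pi_{\mathrm{ref}}}}\!\left[\frac{\pi(a\mid s)}{\pi_{\mathrm{ref}}(a\mid s)}A^{\pi_k}(s,a)\right]\;-\;\frac{2\gamma C^{\pi,\pi_k}}{(1-\gamma)^2}\,\mathbb E_{s\sim d^{\pi_{\mathrm{ref}}}}\big[\mathrm{TV}(\pi,\pi_{\mathrm{ref}})(s)\big],$$ where $C^{\pi,\pi_k}=\max_{s\in\mathcal S}\big|\mathbb E_{a\sim\pi(\cdot\mid s)}[A^{\pi_k}(s,a)]\big|$.
   Context: We work with an infinite-horizon discounted Markov decision process $(\mathcal S,\mathcal A,p,r,\rho_0,\gamma)$ with state space $\mathcal S$, action space $\mathcal A$, transition kernel $p(\cdot\mid s,a)$, reward $r:\mathcal S\times\mathcal A\to\mathbb R$, initial state distribution $\rho_0$, and discount $\gamma\in[0,1)$. A (stationary) policy $\pi$ maps each state $s$ to a distribution $\pi(\cdot\mid s)$ over actions. The objective is $J(\pi)=\mathbb E_{\tau\sim\pi}[\sum_{t=0}^\infty\gamma^t r(s_t,a_t)]$, where trajectories are generated by $s_0\sim\rho_0$, $a_t\sim\pi(\cdot\mid s_t)$, $s_{t+1}\sim p(\cdot\mid s_t,a_t)$. The normalized discounted state visitation distribution is $d^{\pi}(s)=(1-\gamma)\sum_{t=0}^\infty\gamma^t\,\mathbb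 P(s_t=s\mid\rho_0,\pi,p)$, and $d^{\pi}(s,a)=d^{\pi}(s)\pi(a\mid s)$ is the corresponding state-action distribution. $V^{\pi}(s)$ and $Q^{\pi}(s,a)$ are the usual discounted state and state-action value functions of $\pi$, and $A^{\pi}(s,a)=Q^{\pi}(s,a)-V^{\pi}(s)$ is the advantage function. $\mathrm{TV}(\pi,\pi')(s)$ is the total variation distance between $\pi(\cdot\mid s)$ and $\pi'(\cdot\mid s)$. *)

theory Defs
  imports Complex_Main
begin

text \<open>A transition kernel is p s a s' = P(s' | s, a); a policy is pol s a = pi(a | s);
  a distribution on a finite type is a nonnegative function summing to 1.\<close>

definition is_dist :: "('x::finite \<Rightarrow> real) \<Rightarrow> bool" where
  "is_dist \<mu> \<longleftrightarrow> (\<forall>x. 0 \<le> \<mu> x) \<and> (\<Sum>x\<in>UNIV. \<mu> x) = 1"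

definition is_policy :: "('s::finite \<Rightarrow> 'a::finite \<Rightarrow> real) \<Rightarrow> bool" where
  "is_policy pol \<longleftrightarrow> (\<forall>s. is_dist (pol s))"

definition is_kernel :: "('s::finite \<Rightarrow> 'a::finite \<Rightarrow> 's \<Rightarrow> real) \<Rightarrow> bool" where
  "is_kernel p \<longleftrightarrow> (\<forall>s a. is_dist (p s a))"

fun state_dist :: "('s::finite \<Rightarrow> 'a::finite \<Rightarrow> 's \<Rightarrow> real) \<Rightarrow> ('s \<Rightarrow> real)
    \<Rightarrow> ('s \<Rightarrow> 'a \<Rightarrow> real) \<Rightarrow> nat \<Rightarrow> 's \<Rightarrow> real" where
  "state_dist p \<mu> pol 0 s = \<mu> s"
| "state_dist p \<mu> pol (Suc t) s' =
     (\<Sum>s\<in>UNIV. \<Sum>a\<in>UNIV. state_dist p \<mu> pol t s * pol s a * p s a s')"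

definition visit :: "('s::finite \<Rightarrow> 'a::finite \<Rightarrow> 's \<Rightarrow> real) \<Rightarrow> ('s \<Rightarrow> real) \<Rightarrow> real
    \<Rightarrow> ('s \<Rightarrow> 'a \<Rightarrow> real) \<Rightarrow> 's \<Rightarrow> real" where
  "visit p \<mu> \<gamma> pol s = (1 - \<gamma>) * (\<Sum>t. \<gamma> ^ t * state_dist p \<mu> pol t s)"

definition disc_return :: "('s::finite \<Rightarrow> 'a::finite \<Rightarrow> 's \<Rightarrow> real) \<Rightarrow> ('s \<Rightarrow> 'a \<Rightarrow> real)
    \<Rightarrow> ('s \<Rightarrow> real) \<Rightarrow> real \<Rightarrow> ('s \<Rightarrow> 'a \<Rightarrow> real) \<Rightarrow> real" where
  "disc_return p r \<mu> \<gamma> pol =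
     (\<Sum>t. \<gamma> ^ t * (\<Sum>s\<in>UNIV. \<Sum>a\<in>UNIV. state_dist p \<mu> pol t s * pol s a * r s a))"

definition J_obj where
  "J_obj p r \<rho>0 \<gamma> pol = disc_return p r \<rho>0 \<gamma> pol"

definition V_fun where
  "V_fun p r \<gamma> pol s = disc_return p r (\<lambda>s'. if s' = s then 1 else 0) \<gamma> pol"

definition Q_fun where
  "Q_fun p r \<gamma> pol s a = r s a + \<gamma> * (\<Sum>s'\<in>UNIV. p s a s' * V_fun p r \<gamma> pol s')"

definition Adv where
  "Adv p r \<gamma> pol s a = Q_fun p r \<gamma> pol s a - V_fun p r \<gamma> pol s"

definition TV :: "('s \<Rightarrow> 'a::finite \<Rightarrow> real) \<Rightarrow> ('s \<Rightarrow> 'a \<Rightarrow> real) \<Rightarrow> 's \<Rightarrow> real" where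
  "TV pol pol' s = (1/2) * (\<Sum>a\<in>UNIV. \<bar>pol s a - pol' s a\<bar>)"

definition C_const where
  "C_const p r \<gamma> pol polk =
     Max (range (\<lambda>s. \<bar>\<Sum>a\<in>UNIV. pol s a * Adv p r \<gamma> polk s a\<bar>))"

end

theory Submission
  imports Defs
begin


lemma dist_le1:
  fixes \<mu> :: "'x::finite \<Rightarrow> real"
  assumes "is_dist \<mu>" shows "\<mu> x \<le> 1"
proof -
  have "\<mu> x \<le> (\<Sum>y\<in>UNIV. \<mu> y)"
    using assms unfolding is_dist_def by (intro member_le_sum) auto
  thus ?thesis using assms unfolding is_dist_def by simp
qed

lemma dist_nonneg: "is_dist \<mu> \<Longrightarrow> 0 \<le> \<mu> x"
  unfolding is_dist_def by auto

lemma sd_dist: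
  assumes "is_kernel p" "is_policy pol" "is_dist \<mu>"
  shows "is_dist (state_dist p \<mu> pol t)"
proof (induction t)
  case 0 then show ?case using assms by simp
next
  case (Suc t)
  have nn: "0 \<le> state_dist p \<mu> pol (Suc t) s'" for s'
    using Suc assms unfolding is_dist_def is_policy_def is_kernel_def
    by (simp add: sum_nonneg)
  have "(\<Sum>s'\<in>UNIV. state_dist p \<mu> pol (Suc t) s')
     = (\<Sum>s\<in>UNIV. \<Sum>a\<in>UNIV. state_dist p \<mu> pol t s * pol s a * (\<Sum>s'\<in>UNIV. p s a s'))"
  proof -
    have "(\<Sum>s'\<in>UNIV. state_dist p \<mu> pol (Suc t) s')
       = (\<Sum>s'\<in>UNIV. \<Sum>s\<in>UNIV. \<Sum>a\<in>UNIV. state_dist p \<mu> pol t s * pol s a * p s a s')" by simp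
    also have "\<dots> = (\<Sum>s\<in>UNIV. \<Sum>s'\<in>UNIV. \<Sum>a\<in>UNIV. state_dist p \<mu> pol t s * pol s a * p s a s')"
      by (rule sum.swap)
    also have "\<dots> = (\<Sum>s\<in>UNIV. \<Sum>a\<in>UNIV. \<Sum>s'\<in>UNIV. state_dist p \<mu> pol t s * pol s a * p s a s')"
      by (intro sum.cong refl) (rule sum.swap)
    also have "\<dots> = (\<Sum>s\<in>UNIV. \<Sum>a\<in>UNIV. state_dist p \<mu> pol t s * pol s a * (\<Sum>s'\<in>UNIV. p s a s'))"
      by (simp only: sum_distrib_left)
    finally show ?thesis .
  qed
  also have "\<dots> = (\<Sum>s\<in>UNIV. state_dist p \<mu> pol t s * (\<Sum>a\<in>UNIV. pol s a))"
    using assms(1) unfolding is_kernel_def is_dist_def by (simp add: sum_distrib_left)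
  also have "\<dots> = 1"
    using assms(2) Suc unfolding is_policy_def is_dist_def by simp
  finally show ?case using nn unfolding is_dist_def by simp
qed

lemma summable_bounded:
  fixes \<gamma> :: real
  assumes "0 \<le> \<gamma>" "\<gamma> < 1" "\<And>t. \<bar>g t\<bar> \<le> B"
  shows "summable (\<lambda>t. \<gamma>^t * g t)"
proof (rule summable_comparison_test[where g="\<lambda>t. B * \<gamma>^t"])
  show "\<exists>N. \<forall>n\<ge>N. norm (\<gamma> ^ n * g n) \<le> B * \<gamma> ^ n"
  proof (intro exI[of _ 0] allI impI)
    fix n :: nat
    show "norm (\<gamma> ^ n * g n) \<le> B * \<gamma> ^ n"
      using mult_right_mono[OF assms(3)[of n] zero_le_power[OF assms(1)]] assms(1)
      by (simp add: abs_mult mult.commute)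
  qed
  show "summable (\<lambda>t. B * \<gamma>^t)" using assms by (intro summable_mult summable_geometric) auto
qed

lemma sd_shift:
  "state_dist p \<mu> pol (Suc t) s = state_dist p (state_dist p \<mu> pol 1) pol t s"
proof (induction t arbitrary: s)
  case 0 then show ?case by simp
next
  case (Suc t) then show ?case by simp
qed

lemma sd_linear:
  "state_dist p \<mu> pol t s' = (\<Sum>s0\<in>UNIV. \<mu> s0 * state_dist p (\<lambda>x. if x = s0 then 1 else 0) pol t s')"
proof (induction t arbitrary: s')
  case 0
  have "(\<Sum>s0\<in>UNIV. \<mu> s0 * (if s' = s0 then 1 else 0)) = (\<Sum>s0\<in>UNIV. if s' = s0 then \<mu> s0 else 0)"
    by (intro sum.cong) auto
  then show ?case by simp
next
  case (Suc t)
  have "state_dist p \<mu> pol (Suc t) s' =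
     (\<Sum>s\<in>UNIV. \<Sum>a\<in>UNIV. (\<Sum>s0\<in>UNIV. \<mu> s0 * state_dist p (\<lambda>x. if x = s0 then 1 else 0) pol t s) * pol s a * p s a s')"
    using Suc by simp
  also have "\<dots> = (\<Sum>s\<in>UNIV. \<Sum>a\<in>UNIV. \<Sum>s0\<in>UNIV. \<mu> s0 * (state_dist p (\<lambda>x. if x = s0 then 1 else 0) pol t s * pol s a * p s a s'))"
    by (simp only: sum_distrib_right mult.assoc)
  also have "\<dots> = (\<Sum>s\<in>UNIV. \<Sum>s0\<in>UNIV. \<Sum>a\<in>UNIV. \<mu> s0 * (state_dist p (\<lambda>x. if x = s0 then 1 else 0) pol t s * pol s a * p s a s'))"
    by (intro sum.cong refl) (rule sum.swap)
  also have "\<dots> = (\<Sum>s0\<in>UNIV. \<Sum>s\<in>UNIV. \<Sum>a\<in>UNIV. \<mu> s0 * (state_dist p (\<lambda>x. if x = s0 then 1 else 0) pol t s * pol s a * p s a s'))"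
    by (rule sum.swap)
  also have "\<dots> = (\<Sum>s0\<in>UNIV. \<mu> s0 * (\<Sum>s\<in>UNIV. \<Sum>a\<in>UNIV. state_dist p (\<lambda>x. if x = s0 then 1 else 0) pol t s * pol s a * p s a s'))"
    by (simp add: sum_distrib_left)
  finally show ?case by (simp only: state_dist.simps)
qed



lemma sum_mix:
  fixes c :: "'z::finite \<Rightarrow> real" and X :: "'z \<Rightarrow> 's::finite \<Rightarrow> real" and g :: "'s \<Rightarrow> 'a::finite \<Rightarrow> real"
  shows "(\<Sum>s\<in>UNIV. \<Sum>a\<in>UNIV. (\<Sum>z\<in>UNIV. c z * X z s) * g s a)
       = (\<Sum>z\<in>UNIV. c z * (\<Sum>s\<in>UNIV. \<Sum>a\<in>UNIV. X z s * g s a))"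
proof -
  have "(\<Sum>s\<in>UNIV. \<Sum>a\<in>UNIV. (\<Sum>z\<in>UNIV. c z * X z s) * g s a)
      = (\<Sum>s\<in>UNIV. \<Sum>a\<in>UNIV. \<Sum>z\<in>UNIV. c z * (X z s * g s a))"
    by (simp only: sum_distrib_right mult.assoc)
  also have "\<dots> = (\<Sum>s\<in>UNIV. \<Sum>z\<in>UNIV. \<Sum>a\<in>UNIV. c z * (X z s * g s a))"
    by (intro sum.cong refl) (rule sum.swap)
  also have "\<dots> = (\<Sum>z\<in>UNIV. \<Sum>s\<in>UNIV. \<Sum>a\<in>UNIV. c z * (X z s * g s a))"
    by (rule sum.swap)
  also have "\<dots> = (\<Sum>z\<in>UNIV. c z * (\<Sum>s\<in>UNIV. \<Sum>a\<in>UNIV. X z s * g s a))"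
    by (simp only: sum_distrib_left)
  finally show ?thesis .
qed

lemma R_bound:
  fixes g :: "'s::finite \<Rightarrow> 'a::finite \<Rightarrow> real"
  assumes "is_kernel p" "is_policy pol" "is_dist \<mu>"
  shows "\<bar>\<Sum>s\<in>UNIV. \<Sum>a\<in>UNIV. state_dist p \<mu> pol t s * pol s a * g s a\<bar>
          \<le> (\<Sum>s\<in>UNIV. \<Sum>a\<in>UNIV. \<bar>g s a\<bar>)"
proof -
  have d: "is_dist (state_dist p \<mu> pol t)" using sd_dist assms by blast
  have "\<bar>\<Sum>s\<in>UNIV. \<Sum>a\<in>UNIV. state_dist p \<mu> pol t s * pol s a * g s a\<bar>
     \<le> (\<Sum>s\<in>UNIV. \<bar>\<Sum>a\<in>UNIV. state_dist p \<mu> pol t s * pol s a * g s a\<bar>)" by (rule sum_abs)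
  also have "\<dots> \<le> (\<Sum>s\<in>UNIV. \<Sum>a\<in>UNIV. \<bar>state_dist p \<mu> pol t s * pol s a * g s a\<bar>)"
    by (intro sum_mono sum_abs)
  also have "\<dots> \<le> (\<Sum>s\<in>UNIV. \<Sum>a\<in>UNIV. \<bar>g s a\<bar>)"
  proof (intro sum_mono)
    fix s a
    have "0 \<le> state_dist p \<mu> pol t s" "state_dist p \<mu> pol t s \<le> 1" "0 \<le> pol s a" "pol s a \<le> 1"
      using d assms(2) dist_nonneg dist_le1 unfolding is_policy_def by blast+
    then have "state_dist p \<mu> pol t s * pol s a \<le> 1" "0 \<le> state_dist p \<mu> pol t s * pol s a"
      by (simp_all add: mult_le_one)
    then show "\<bar>state_dist p \<mu> pol t s * pol s a * g s a\<bar> \<le> \<bar>g s a\<bar>"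
      by (simp add: abs_mult mult_left_le_one_le)
  qed
  finally show ?thesis .
qed

lemma disc_summable:
  assumes "is_kernel p" "is_policy pol" "is_dist \<mu>" "0 \<le> \<gamma>" "\<gamma> < 1"
  shows "summable (\<lambda>t. \<gamma>^t * (\<Sum>s\<in>UNIV. \<Sum>a\<in>UNIV. state_dist p \<mu> pol t s * pol s a * g s a))"
  by (rule summable_bounded[OF assms(4,5)], rule R_bound[OF assms(1-3)])

lemma delta_dist: "is_dist (\<lambda>x. if x = s0 then (1::real) else 0)"
  unfolding is_dist_def by simp

lemma disc_linear:
  assumes "is_kernel p" "is_policy pol" "0 \<le> \<gamma>" "\<gamma> < 1"
  shows "disc_return p r \<mu> \<gamma> pol = (\<Sum>s0\<in>UNIV. \<mu> s0 * V_fun p r \<gamma> pol s0)"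
proof -
  let ?D = "\<lambda>s0. (\<lambda>x. if x = s0 then (1::real) else 0)"
  let ?f = "\<lambda>s0 t. \<mu> s0 * (\<gamma>^t * (\<Sum>s\<in>UNIV. \<Sum>a\<in>UNIV. state_dist p (?D s0) pol t s * pol s a * r s a))"
  have eq: "\<gamma>^t * (\<Sum>s\<in>UNIV. \<Sum>a\<in>UNIV. state_dist p \<mu> pol t s * pol s a * r s a) = (\<Sum>s0\<in>UNIV. ?f s0 t)" for t
  proof -
    have "(\<Sum>s\<in>UNIV. \<Sum>a\<in>UNIV. state_dist p \<mu> pol t s * pol s a * r s a)
      = (\<Sum>s\<in>UNIV. \<Sum>a\<in>UNIV. (\<Sum>s0\<in>UNIV. \<mu> s0 * state_dist p (?D s0) pol t s) * (pol s a * r s a))"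
      by (subst sd_linear) (simp only: mult.assoc)
    also have "\<dots> = (\<Sum>s0\<in>UNIV. \<mu> s0 * (\<Sum>s\<in>UNIV. \<Sum>a\<in>UNIV. state_dist p (?D s0) pol t s * (pol s a * r s a)))"
      by (rule sum_mix)
    finally show ?thesis by (simp add: sum_distrib_left mult.assoc mult.left_commute)
  qed
  have sm: "summable (?f s0)" for s0
    by (intro summable_mult disc_summable[OF assms(1,2) delta_dist assms(3,4)])
  have "disc_return p r \<mu> \<gamma> pol = (\<Sum>t. \<Sum>s0\<in>UNIV. ?f s0 t)"
    unfolding disc_return_def eq ..
  also have "\<dots> = (\<Sum>s0\<in>UNIV. \<Sum>t. ?f s0 t)" by (rule suminf_sum) (rule sm)
  also have "\<dots> = (\<Sum>s0\<in>UNIV. \<mu> s0 * V_fun p r \<gamma> pol s0)"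
    unfolding V_fun_def disc_return_def
    by (intro sum.cong refl suminf_mult disc_summable[OF assms(1,2) delta_dist assms(3,4)])
  finally show ?thesis .
qed

lemma bellman:
  assumes "is_kernel p" "is_policy pol" "0 \<le> \<gamma>" "\<gamma> < 1"
  shows "V_fun p r \<gamma> pol s = (\<Sum>a\<in>UNIV. pol s a * Q_fun p r \<gamma> pol s a)"
proof -
  let ?d = "(\<lambda>x. if x = s then (1::real) else 0)"
  let ?m = "state_dist p ?d pol 1"
  let ?f = "\<lambda>t. \<gamma>^t * (\<Sum>s\<in>UNIV. \<Sum>a\<in>UNIV. state_dist p ?d pol t s * pol s a * r s a)"
  have sm: "summable ?f" by (rule disc_summable[OF assms(1,2) delta_dist assms(3,4)])
  have f0: "?f 0 = (\<Sum>a\<in>UNIV. pol s a * r s a)"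
  proof -
    have "?f 0 = (\<Sum>s'\<in>UNIV. (if s' = s then 1 else 0) * (\<Sum>a\<in>UNIV. pol s' a * r s' a))"
      by (simp add: sum_distrib_left mult.assoc)
    also have "\<dots> = (\<Sum>s'\<in>UNIV. if s' = s then (\<Sum>a\<in>UNIV. pol s' a * r s' a) else 0)"
      by (intro sum.cong refl) simp
    finally show ?thesis by simp
  qed
  have fS: "?f (Suc t) = \<gamma> * (\<gamma>^t * (\<Sum>s\<in>UNIV. \<Sum>a\<in>UNIV. state_dist p ?m pol t s * pol s a * r s a))" for t
    by (simp only: sd_shift power_Suc mult.assoc)
  have "V_fun p r \<gamma> pol s = ?f 0 + (\<Sum>t. ?f (Suc t))"
    unfolding V_fun_def disc_return_def using suminf_split_head[OF sm] by simp
  also have "?f 0 = (\<Sum>a\<in>UNIV. pol s a * r s a)" by (rule f0)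
  also have "(\<Sum>t. ?f (Suc t)) = \<gamma> * disc_return p r ?m \<gamma> pol"
    unfolding fS disc_return_def
    by (rule suminf_mult, rule disc_summable[OF assms(1,2) sd_dist[OF assms(1,2) delta_dist] assms(3,4)])
  also have "disc_return p r ?m \<gamma> pol = (\<Sum>s'\<in>UNIV. ?m s' * V_fun p r \<gamma> pol s')"
    by (rule disc_linear[OF assms])
  also have "\<dots> = (\<Sum>s'\<in>UNIV. (\<Sum>a\<in>UNIV. pol s a * p s a s') * V_fun p r \<gamma> pol s')"
  proof (intro sum.cong refl)
    fix s'
    have "?m s' = (\<Sum>x\<in>UNIV. \<Sum>a\<in>UNIV. (if x = s then 1 else 0) * pol x a * p x a s')"
      by (simp only: One_nat_def state_dist.simps)
    also have "\<dots> = (\<Sum>x\<in>UNIV. if x = s then (\<Sum>a\<in>UNIV. pol x a * p x a s') else 0)"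
      by (intro sum.cong refl) simp
    finally have "?m s' = (\<Sum>x\<in>UNIV. if x = s then (\<Sum>a\<in>UNIV. pol x a * p x a s') else 0)" .
    thus "?m s' * V_fun p r \<gamma> pol s' = (\<Sum>a\<in>UNIV. pol s a * p s a s') * V_fun p r \<gamma> pol s'" by simp
  qed
  also have "\<dots> = (\<Sum>a\<in>UNIV. pol s a * (\<Sum>s'\<in>UNIV. p s a s' * V_fun p r \<gamma> pol s'))"
  proof -
    have "(\<Sum>s'\<in>UNIV. (\<Sum>a\<in>UNIV. pol s a * p s a s') * V_fun p r \<gamma> pol s')
       = (\<Sum>s'\<in>UNIV. \<Sum>a\<in>UNIV. pol s a * (p s a s' * V_fun p r \<gamma> pol s'))"
      by (simp only: sum_distrib_right mult.assoc)
    also have "\<dots> = (\<Sum>a\<in>UNIV. \<Sum>s'\<in>UNIV. pol s a * (p s a s' * V_fun p r \<gamma> pol s'))"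
      by (rule sum.swap)
    also have "\<dots> = (\<Sum>a\<in>UNIV. pol s a * (\<Sum>s'\<in>UNIV. p s a s' * V_fun p r \<gamma> pol s'))"
      by (simp only: sum_distrib_left)
    finally show ?thesis .
  qed
  finally show ?thesis
    unfolding Q_fun_def by (simp add: distrib_left sum.distrib sum_distrib_left mult.left_commute)
qed



lemma sd_bound:
  assumes "is_kernel p" "is_policy pol" "is_dist \<mu>"
  shows "\<bar>\<Sum>s\<in>UNIV. state_dist p \<mu> pol t s * g s\<bar> \<le> (\<Sum>s\<in>UNIV. \<bar>g s\<bar>)"
proof -
  have d: "is_dist (state_dist p \<mu> pol t)" using sd_dist assms by blast
  have "\<bar>\<Sum>s\<in>UNIV. state_dist p \<mu> pol t s * g s\<bar> \<le> (\<Sum>s\<in>UNIV. \<bar>state_dist p \<mu> pol t s * g s\<bar>)"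
    by (rule sum_abs)
  also have "\<dots> \<le> (\<Sum>s\<in>UNIV. \<bar>g s\<bar>)"
  proof (intro sum_mono)
    fix s
    have "0 \<le> state_dist p \<mu> pol t s" "state_dist p \<mu> pol t s \<le> 1"
      using d dist_nonneg dist_le1 by blast+
    then show "\<bar>state_dist p \<mu> pol t s * g s\<bar> \<le> \<bar>g s\<bar>"
      by (simp add: abs_mult mult_left_le_one_le)
  qed
  finally show ?thesis .
qed

lemma perf_diff:
  assumes kp: "is_kernel p" and dr: "is_dist \<rho>0" and g0: "0 \<le> \<gamma>" and g1: "\<gamma> < 1"
    and pp: "is_policy \<pi>" and pk: "is_policy \<pi>k"
  shows "J_obj p r \<rho>0 \<gamma> \<pi> - J_obj p r \<rho>0 \<gamma> \<pi>k =
    (\<Sum>t. \<gamma>^t * (\<Sum>s\<in>UNIV. state_dist p \<rho>0 \<pi> t s * (\<Sum>a\<in>UNIV. \<pi> s a * Adv p r \<gamma> \<pi>k s a)))"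
proof -
  define V where "V = V_fun p r \<gamma> \<pi>k"
  define sd where "sd = state_dist p \<rho>0 \<pi>"
  define D where "D t = (\<Sum>s\<in>UNIV. sd t s * V s)" for t
  define R where "R t = (\<Sum>s\<in>UNIV. \<Sum>a\<in>UNIV. sd t s * \<pi> s a * r s a)" for t
  have pis: "(\<Sum>a\<in>UNIV. \<pi> s a) = 1" for s using pp unfolding is_policy_def is_dist_def by blast
  have DS: "D (Suc t) = (\<Sum>s\<in>UNIV. sd t s * (\<Sum>a\<in>UNIV. \<pi> s a * (\<Sum>s'\<in>UNIV. p s a s' * V s')))" for t
  proof -
    have "D (Suc t) = (\<Sum>s'\<in>UNIV. \<Sum>s\<in>UNIV. \<Sum>a\<in>UNIV. sd t s * \<pi> s a * p s a s' * V s')"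
      unfolding D_def sd_def by (simp only: state_dist.simps sum_distrib_right)
    also have "\<dots> = (\<Sum>s\<in>UNIV. \<Sum>s'\<in>UNIV. \<Sum>a\<in>UNIV. sd t s * \<pi> s a * p s a s' * V s')"
      by (rule sum.swap)
    also have "\<dots> = (\<Sum>s\<in>UNIV. \<Sum>a\<in>UNIV. \<Sum>s'\<in>UNIV. sd t s * \<pi> s a * p s a s' * V s')"
      by (intro sum.cong refl) (rule sum.swap)
    also have "\<dots> = (\<Sum>s\<in>UNIV. \<Sum>a\<in>UNIV. \<Sum>s'\<in>UNIV. sd t s * (\<pi> s a * (p s a s' * V s')))"
      by (simp only: mult.assoc)
    also have "\<dots> = (\<Sum>s\<in>UNIV. sd t s * (\<Sum>a\<in>UNIV. \<pi> s a * (\<Sum>s'\<in>UNIV. p s a s' * V s')))"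
      by (simp only: sum_distrib_left)
    finally show ?thesis .
  qed
  have key: "(\<Sum>s\<in>UNIV. sd t s * (\<Sum>a\<in>UNIV. \<pi> s a * Adv p r \<gamma> \<pi>k s a)) = R t + \<gamma> * D (Suc t) - D t" for t
  proof -
    have inner: "(\<Sum>a\<in>UNIV. \<pi> s a * Adv p r \<gamma> \<pi>k s a) =
       (\<Sum>a\<in>UNIV. \<pi> s a * r s a) + \<gamma> * (\<Sum>a\<in>UNIV. \<pi> s a * (\<Sum>s'\<in>UNIV. p s a s' * V s')) - V s" for s
    proof -
      have "(\<Sum>a\<in>UNIV. \<pi> s a * Adv p r \<gamma> \<pi>k s a) =
        (\<Sum>a\<in>UNIV. \<pi> s a * r s a + \<gamma> * (\<pi> s a * (\<Sum>s'\<in>UNIV. p s a s' * V s')) - \<pi> s a * V s)"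
        unfolding Adv_def Q_fun_def V_def by (intro sum.cong refl) (simp add: algebra_simps)
      also have "\<dots> = (\<Sum>a\<in>UNIV. \<pi> s a * r s a) + \<gamma> * (\<Sum>a\<in>UNIV. \<pi> s a * (\<Sum>s'\<in>UNIV. p s a s' * V s')) - (\<Sum>a\<in>UNIV. \<pi> s a) * V s"
        by (simp only: sum.distrib sum_subtractf sum_distrib_left sum_distrib_right)
      finally show ?thesis using pis by simp
    qed
    have "(\<Sum>s\<in>UNIV. sd t s * (\<Sum>a\<in>UNIV. \<pi> s a * Adv p r \<gamma> \<pi>k s a)) =
      (\<Sum>s\<in>UNIV. sd t s * (\<Sum>a\<in>UNIV. \<pi> s a * r s a) + \<gamma> * (sd t s * (\<Sum>a\<in>UNIV. \<pi> s a * (\<Sum>s'\<in>UNIV. p s a s' * V s'))) - sd t s * V s)"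
      unfolding inner by (intro sum.cong refl) (simp add: algebra_simps)
    also have "\<dots> = (\<Sum>s\<in>UNIV. sd t s * (\<Sum>a\<in>UNIV. \<pi> s a * r s a)) + \<gamma> * D (Suc t) - D t"
      by (subst DS, subst D_def, simp only: sum.distrib sum_subtractf sum_distrib_left)
    also have "(\<Sum>s\<in>UNIV. sd t s * (\<Sum>a\<in>UNIV. \<pi> s a * r s a)) = R t"
      unfolding R_def by (simp only: sum_distrib_left mult.assoc)
    finally show ?thesis .
  qed
  have sdd: "is_dist (sd t)" for t unfolding sd_def by (rule sd_dist[OF kp pp dr])
  have Rs: "(\<lambda>t. \<gamma>^t * R t) sums J_obj p r \<rho>0 \<gamma> \<pi>"
    unfolding J_obj_def disc_return_def R_def sd_def
    by (rule summable_sums, rule disc_summable[OF kp pp dr g0 g1])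
  have Db: "\<bar>D t\<bar> \<le> (\<Sum>s\<in>UNIV. \<bar>V s\<bar>)" for t
    unfolding D_def sd_def by (rule sd_bound[OF kp pp dr])
  have Gz: "(\<lambda>t. \<gamma>^t * D t) \<longlonglongrightarrow> 0"
    by (rule summable_LIMSEQ_zero, rule summable_bounded[OF g0 g1 Db])
  have Ts: "(\<lambda>t. \<gamma>^(Suc t) * D (Suc t) - \<gamma>^t * D t) sums (0 - \<gamma>^0 * D 0)"
    using telescope_sums[OF Gz] by simp
  have D0: "D 0 = J_obj p r \<rho>0 \<gamma> \<pi>k"
    unfolding D_def sd_def V_def J_obj_def using disc_linear[OF kp pk g0 g1] by simp
  have "(\<lambda>t. \<gamma>^t * R t + (\<gamma>^(Suc t) * D (Suc t) - \<gamma>^t * D t)) sums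
      (J_obj p r \<rho>0 \<gamma> \<pi> + (0 - \<gamma>^0 * D 0))"
    by (rule sums_add[OF Rs Ts])
  moreover have "(\<lambda>t. \<gamma>^t * R t + (\<gamma>^(Suc t) * D (Suc t) - \<gamma>^t * D t)) =
     (\<lambda>t. \<gamma>^t * (\<Sum>s\<in>UNIV. sd t s * (\<Sum>a\<in>UNIV. \<pi> s a * Adv p r \<gamma> \<pi>k s a)))"
    unfolding key by (simp add: algebra_simps)
  ultimately have "(\<lambda>t. \<gamma>^t * (\<Sum>s\<in>UNIV. sd t s * (\<Sum>a\<in>UNIV. \<pi> s a * Adv p r \<gamma> \<pi>k s a))) sums
      (J_obj p r \<rho>0 \<gamma> \<pi> - J_obj p r \<rho>0 \<gamma> \<pi>k)" using D0 by simp
  then show ?thesis unfolding sd_def by (rule sums_unique)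
qed



lemma kern_contract:
  fixes Y :: "'s::finite \<Rightarrow> 'a::finite \<Rightarrow> real"
  assumes "is_kernel p"
  shows "(\<Sum>s'\<in>UNIV. \<bar>\<Sum>s\<in>UNIV. \<Sum>a\<in>UNIV. Y s a * p s a s'\<bar>) \<le> (\<Sum>s\<in>UNIV. \<Sum>a\<in>UNIV. \<bar>Y s a\<bar>)"
proof -
  have pn: "0 \<le> p s a s'" for s a s' using assms unfolding is_kernel_def is_dist_def by blast
  have ps: "(\<Sum>s'\<in>UNIV. p s a s') = 1" for s a using assms unfolding is_kernel_def is_dist_def by blast
  have "(\<Sum>s'\<in>UNIV. \<bar>\<Sum>s\<in>UNIV. \<Sum>a\<in>UNIV. Y s a * p s a s'\<bar>) \<le>
        (\<Sum>s'\<in>UNIV. \<Sum>s\<in>UNIV. \<Sum>a\<in>UNIV. \<bar>Y s a\<bar> * p s a s')"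
  proof (intro sum_mono)
    fix s'
    have "\<bar>\<Sum>s\<in>UNIV. \<Sum>a\<in>UNIV. Y s a * p s a s'\<bar> \<le> (\<Sum>s\<in>UNIV. \<bar>\<Sum>a\<in>UNIV. Y s a * p s a s'\<bar>)"
      by (rule sum_abs)
    also have "\<dots> \<le> (\<Sum>s\<in>UNIV. \<Sum>a\<in>UNIV. \<bar>Y s a * p s a s'\<bar>)" by (intro sum_mono sum_abs)
    also have "\<dots> = (\<Sum>s\<in>UNIV. \<Sum>a\<in>UNIV. \<bar>Y s a\<bar> * p s a s')"
      using pn by (simp add: abs_mult)
    finally show "\<bar>\<Sum>s\<in>UNIV. \<Sum>a\<in>UNIV. Y s a * p s a s'\<bar> \<le> (\<Sum>s\<in>UNIV. \<Sum>a\<in>UNIV. \<bar>Y s a\<bar> * p s a s')" .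
  qed
  also have "\<dots> = (\<Sum>s\<in>UNIV. \<Sum>s'\<in>UNIV. \<Sum>a\<in>UNIV. \<bar>Y s a\<bar> * p s a s')" by (rule sum.swap)
  also have "\<dots> = (\<Sum>s\<in>UNIV. \<Sum>a\<in>UNIV. \<Sum>s'\<in>UNIV. \<bar>Y s a\<bar> * p s a s')"
    by (intro sum.cong refl) (rule sum.swap)
  also have "\<dots> = (\<Sum>s\<in>UNIV. \<Sum>a\<in>UNIV. \<bar>Y s a\<bar> * (\<Sum>s'\<in>UNIV. p s a s'))"
    by (simp only: sum_distrib_left)
  also have "\<dots> = (\<Sum>s\<in>UNIV. \<Sum>a\<in>UNIV. \<bar>Y s a\<bar>)" using ps by simp
  finally show ?thesis .
qed

lemma visit_nonneg:
  assumes "is_kernel p" "is_policy pol" "is_dist \<mu>" "0 \<le> \<gamma>" "\<gamma> < 1"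
  shows "0 \<le> visit p \<mu> \<gamma> pol s"
proof -
  have d: "is_dist (state_dist p \<mu> pol t)" for t using sd_dist assms by blast
  have b: "\<bar>state_dist p \<mu> pol t s\<bar> \<le> 1" for t
    using dist_nonneg[OF d[of t], of s] dist_le1[OF d[of t], of s] by simp
  have "0 \<le> (\<Sum>t. \<gamma> ^ t * state_dist p \<mu> pol t s)"
    by (rule suminf_nonneg[OF summable_bounded[OF assms(4,5) b]]) (use dist_nonneg[OF d] assms(4) in simp)
  then show ?thesis unfolding visit_def using assms(5) by simp
qed

lemma visit_sum:
  assumes "is_kernel p" "is_policy pol" "is_dist \<mu>" "0 \<le> \<gamma>" "\<gamma> < 1"
  shows "(\<Sum>s\<in>UNIV. visit p \<mu> \<gamma> pol s * g s) =
         (1 - \<gamma>) * (\<Sum>t. \<gamma>^t * (\<Sum>s\<in>UNIV. state_dist p \<mu> pol t s * g s))"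
proof -
  have d: "is_dist (state_dist p \<mu> pol t)" for t using sd_dist assms by blast
  have b: "\<bar>state_dist p \<mu> pol t s\<bar> \<le> 1" for t s
    using dist_nonneg[OF d[of t], of s] dist_le1[OF d[of t], of s] by simp
  have sm: "summable (\<lambda>t. \<gamma>^t * state_dist p \<mu> pol t s * g s)" for s
    by (rule summable_mult2, rule summable_bounded[OF assms(4,5) b])
  have "(\<Sum>s\<in>UNIV. visit p \<mu> \<gamma> pol s * g s) = (1 - \<gamma>) * (\<Sum>s\<in>UNIV. \<Sum>t. \<gamma>^t * state_dist p \<mu> pol t s * g s)"
    unfolding visit_def sum_distrib_left
    by (intro sum.cong refl) (simp add: suminf_mult2[OF summable_bounded[OF assms(4,5) b]])
  also have "(\<Sum>s\<in>UNIV. \<Sum>t. \<gamma>^t * state_dist p \<mu> pol t s * g s) = (\<Sum>t. \<Sum>s\<in>UNIV. \<gamma>^t * state_dist p \<mu> pol t s * g s)"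
    by (rule suminf_sum[symmetric]) (rule sm)
  also have "\<dots> = (\<Sum>t. \<gamma>^t * (\<Sum>s\<in>UNIV. state_dist p \<mu> pol t s * g s))"
    by (simp only: sum_distrib_left mult.assoc)
  finally show ?thesis .
qed



theorem lemma3:
  fixes p :: "'s::finite \<Rightarrow> 'a::finite \<Rightarrow> 's \<Rightarrow> real"
    and r :: "'s \<Rightarrow> 'a \<Rightarrow> real"
    and \<rho>0 :: "'s \<Rightarrow> real"
    and \<gamma> :: real
    and \<pi> \<pi>k \<pi>ref :: "'s \<Rightarrow> 'a \<Rightarrow> real"
  assumes "is_kernel p" and "is_dist \<rho>0" and "0 \<le> \<gamma>" and "\<gamma> < 1"
    and "is_policy \<pi>" and "is_policy \<pi>k" and "is_policy \<pi>ref"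
    and "\<forall>s a. visit p \<rho>0 \<gamma> \<pi>ref s > 0 \<and> \<pi>ref s a = 0 \<longrightarrow> \<pi> s a = 0"
  shows "J_obj p r \<rho>0 \<gamma> \<pi> - J_obj p r \<rho>0 \<gamma> \<pi>k \<ge>
           1 / (1 - \<gamma>) * (\<Sum>s\<in>UNIV. \<Sum>a\<in>UNIV. visit p \<rho>0 \<gamma> \<pi>ref s * \<pi>ref s a *
                 (\<pi> s a / \<pi>ref s a * Adv p r \<gamma> \<pi>k s a))
         - 2 * \<gamma> * C_const p r \<gamma> \<pi> \<pi>k / (1 - \<gamma>)\<^sup>2 *
             (\<Sum>s\<in>UNIV. visit p \<rho>0 \<gamma> \<pi>ref s * TV \<pi> \<pi>ref s)"
proof -
  note kp = assms(1) and dr = assms(2) and g0 = assms(3) and g1 = assms(4)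
    and pp = assms(5) and pk = assms(6) and pr = assms(7) and supp = assms(8)
  define f where "f s = (\<Sum>a\<in>UNIV. \<pi> s a * Adv p r \<gamma> \<pi>k s a)" for s
  define C where "C = C_const p r \<gamma> \<pi> \<pi>k"
  define sA where "sA = state_dist p \<rho>0 \<pi>"
  define sB where "sB = state_dist p \<rho>0 \<pi>ref"
  define n where "n t = (\<Sum>s\<in>UNIV. \<bar>sA t s - sB t s\<bar>)" for t
  define e where "e t = (\<Sum>s\<in>UNIV. sB t s * TV \<pi> \<pi>ref s)" for t
  define FA where "FA t = (\<Sum>s\<in>UNIV. sA t s * f s)" for t
  define FB where "FB t = (\<Sum>s\<in>UNIV. sB t s * f s)" for t
  have dA: "is_dist (sA t)" for t unfolding sA_def by (rule sd_dist[OF kp pp dr])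
  have dB: "is_dist (sB t)" for t unfolding sB_def by (rule sd_dist[OF kp pr dr])
  have pin: "0 \<le> \<pi> s a" for s a using pp unfolding is_policy_def is_dist_def by blast
  have pis: "(\<Sum>a\<in>UNIV. \<pi> s a) = 1" for s using pp unfolding is_policy_def is_dist_def by blast
  have Cf: "\<bar>f s\<bar> \<le> C" for s
    unfolding C_def C_const_def f_def by (rule Max_ge) auto
  have C0: "0 \<le> C" using Cf[of undefined] by linarith
  have nstep: "n (Suc t) \<le> n t + 2 * e t" for t
  proof -
    define Y where "Y s a = sA t s * \<pi> s a - sB t s * \<pi>ref s a" for s a
    have "n (Suc t) = (\<Sum>s'\<in>UNIV. \<bar>\<Sum>s\<in>UNIV. \<Sum>a\<in>UNIV. Y s a * p s a s'\<bar>)"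
      unfolding n_def Y_def sA_def sB_def
      by (simp only: state_dist.simps sum_subtractf[symmetric] left_diff_distrib)
    also have "\<dots> \<le> (\<Sum>s\<in>UNIV. \<Sum>a\<in>UNIV. \<bar>Y s a\<bar>)" by (rule kern_contract[OF kp])
    also have "\<dots> \<le> (\<Sum>s\<in>UNIV. \<Sum>a\<in>UNIV. \<bar>sA t s - sB t s\<bar> * \<pi> s a + sB t s * \<bar>\<pi> s a - \<pi>ref s a\<bar>)"
    proof (intro sum_mono)
      fix s a
      have "Y s a = (sA t s - sB t s) * \<pi> s a + sB t s * (\<pi> s a - \<pi>ref s a)"
        unfolding Y_def by (simp add: algebra_simps)
      then have "\<bar>Y s a\<bar> \<le> \<bar>(sA t s - sB t s) * \<pi> s a\<bar> + \<bar>sB t s * (\<pi> s a - \<pi>ref s a)\<bar>"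
        by (simp add: abs_triangle_ineq)
      also have "\<dots> = \<bar>sA t s - sB t s\<bar> * \<pi> s a + sB t s * \<bar>\<pi> s a - \<pi>ref s a\<bar>"
        using pin[of s a] dist_nonneg[OF dB[of t], of s] by (simp add: abs_mult)
      finally show "\<bar>Y s a\<bar> \<le> \<bar>sA t s - sB t s\<bar> * \<pi> s a + sB t s * \<bar>\<pi> s a - \<pi>ref s a\<bar>" .
    qed
    also have "\<dots> = n t + 2 * e t"
      unfolding n_def e_def TV_def
      by (simp add: sum.distrib sum_distrib_left[symmetric] pis sum_distrib_right mult.assoc mult.left_commute)
        (simp add: sum_divide_distrib[symmetric])
    finally show ?thesis .
  qed
  have n0: "n 0 = 0" unfolding n_def sA_def sB_def by simp
  have nb: "\<bar>n t\<bar> \<le> 2" for t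
  proof -
    have "n t \<le> (\<Sum>s\<in>UNIV. sA t s + sB t s)" unfolding n_def
      by (intro sum_mono) (use dist_nonneg[OF dA[of t]] dist_nonneg[OF dB[of t]] in \<open>auto simp: abs_le_iff\<close>)
    also have "\<dots> = 2" using dA[of t] dB[of t] unfolding is_dist_def by (simp add: sum.distrib)
    finally show ?thesis unfolding n_def by (simp add: sum_nonneg)
  qed
  have eb: "\<bar>e t\<bar> \<le> (\<Sum>s\<in>UNIV. \<bar>TV \<pi> \<pi>ref s\<bar>)" for t
    unfolding e_def sB_def by (rule sd_bound[OF kp pr dr])
  have sn: "summable (\<lambda>t. \<gamma>^t * n t)" by (rule summable_bounded[OF g0 g1 nb])
  have se: "summable (\<lambda>t. \<gamma>^t * e t)" by (rule summable_bounded[OF g0 g1 eb])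
  define N where "N = (\<Sum>t. \<gamma>^t * n t)"
  define E where "E = (\<Sum>t. \<gamma>^t * e t)"
  have NE: "(1 - \<gamma>) * N \<le> 2 * \<gamma> * E"
  proof -
    have "N = (\<Sum>t. \<gamma>^(Suc t) * n (Suc t))"
      using suminf_split_head[OF sn] n0 unfolding N_def by simp
    also have "\<dots> \<le> (\<Sum>t. \<gamma> * (\<gamma>^t * n t) + 2 * \<gamma> * (\<gamma>^t * e t))"
    proof (rule suminf_le)
      fix t
      have "\<gamma>^(Suc t) * n (Suc t) \<le> \<gamma>^(Suc t) * (n t + 2 * e t)"
        using nstep[of t] g0 by (intro mult_left_mono) auto
      then show "\<gamma>^(Suc t) * n (Suc t) \<le> \<gamma> * (\<gamma>^t * n t) + 2 * \<gamma> * (\<gamma>^t * e t)"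
        by (simp add: algebra_simps)
    next
      show "summable (\<lambda>t. \<gamma>^(Suc t) * n (Suc t))"
        using sn summable_ignore_initial_segment[of _ 1] by fastforce
    next
      show "summable (\<lambda>t. \<gamma> * (\<gamma>^t * n t) + 2 * \<gamma> * (\<gamma>^t * e t))"
        by (intro summable_add summable_mult sn se)
    qed
    also have "\<dots> = \<gamma> * N + 2 * \<gamma> * E"
      unfolding N_def E_def
      by (subst suminf_add[symmetric]) (auto intro!: summable_mult sn se simp: suminf_mult[OF sn] suminf_mult[OF se])
    finally show ?thesis by (simp add: algebra_simps)
  qed
  have sFA: "summable (\<lambda>t. \<gamma>^t * FA t)" unfolding FA_def sA_def
    by (rule summable_bounded[OF g0 g1 sd_bound[OF kp pp dr]])
  have sFB: "summable (\<lambda>t. \<gamma>^t * FB t)" unfolding FB_def sB_def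
    by (rule summable_bounded[OF g0 g1 sd_bound[OF kp pr dr]])
  have cmp: "- (C * (\<gamma>^t * n t)) \<le> \<gamma>^t * FA t - \<gamma>^t * FB t" for t
  proof -
    have "\<bar>FA t - FB t\<bar> = \<bar>\<Sum>s\<in>UNIV. (sA t s - sB t s) * f s\<bar>"
      unfolding FA_def FB_def by (simp add: sum_subtractf left_diff_distrib)
    also have "\<dots> \<le> (\<Sum>s\<in>UNIV. \<bar>(sA t s - sB t s) * f s\<bar>)" by (rule sum_abs)
    also have "\<dots> \<le> (\<Sum>s\<in>UNIV. \<bar>sA t s - sB t s\<bar> * C)"
      by (intro sum_mono) (simp add: abs_mult Cf mult_left_mono)
    also have "\<dots> = C * n t" unfolding n_def by (simp add: sum_distrib_left mult.commute)
    finally have "\<bar>FA t - FB t\<bar> \<le> C * n t" .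
    then have "- (C * n t) \<le> FA t - FB t" by linarith
    then have "\<gamma>^t * (- (C * n t)) \<le> \<gamma>^t * (FA t - FB t)" using g0 by (intro mult_left_mono) auto
    then show ?thesis by (simp add: algebra_simps)
  qed
  have "- (C * N) \<le> (\<Sum>t. \<gamma>^t * FA t) - (\<Sum>t. \<gamma>^t * FB t)"
  proof -
    have "- (C * N) = (\<Sum>t. - (C * (\<gamma>^t * n t)))"
      unfolding N_def using suminf_mult[OF sn, of C] suminf_minus[OF summable_mult[OF sn, of C]] by simp
    also have "\<dots> \<le> (\<Sum>t. \<gamma>^t * FA t - \<gamma>^t * FB t)"
      by (rule suminf_le[OF cmp]) (auto intro!: summable_minus summable_mult sn summable_diff sFA sFB)
    also have "\<dots> = (\<Sum>t. \<gamma>^t * FA t) - (\<Sum>t. \<gamma>^t * FB t)" by (rule suminf_diff[OF sFA sFB, symmetric])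
    finally show ?thesis .
  qed
  moreover have "C * N \<le> 2 * \<gamma> * C * E / (1 - \<gamma>)"
  proof -
    have "(C * N) * (1 - \<gamma>) \<le> 2 * \<gamma> * C * E"
      using mult_left_mono[OF NE C0] by (simp add: algebra_simps)
    then show ?thesis using g1 by (simp add: pos_le_divide_eq)
  qed
  moreover have lhs: "J_obj p r \<rho>0 \<gamma> \<pi> - J_obj p r \<rho>0 \<gamma> \<pi>k = (\<Sum>t. \<gamma>^t * FA t)"
    unfolding FA_def sA_def f_def by (rule perf_diff[OF kp dr g0 g1 pp pk])
  moreover have t1: "1 / (1 - \<gamma>) * (\<Sum>s\<in>UNIV. \<Sum>a\<in>UNIV. visit p \<rho>0 \<gamma> \<pi>ref s * \<pi>ref s a *
                 (\<pi> s a / \<pi>ref s a * Adv p r \<gamma> \<pi>k s a)) = (\<Sum>t. \<gamma>^t * FB t)"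
  proof -
    have "(\<Sum>a\<in>UNIV. visit p \<rho>0 \<gamma> \<pi>ref s * \<pi>ref s a * (\<pi> s a / \<pi>ref s a * Adv p r \<gamma> \<pi>k s a))
          = visit p \<rho>0 \<gamma> \<pi>ref s * f s" for s
    proof (cases "visit p \<rho>0 \<gamma> \<pi>ref s = 0")
      case True then show ?thesis by simp
    next
      case False
      then have vp: "visit p \<rho>0 \<gamma> \<pi>ref s > 0" using visit_nonneg[OF kp pr dr g0 g1, of s] by linarith
      have "(\<Sum>a\<in>UNIV. visit p \<rho>0 \<gamma> \<pi>ref s * \<pi>ref s a * (\<pi> s a / \<pi>ref s a * Adv p r \<gamma> \<pi>k s a))
          = (\<Sum>a\<in>UNIV. visit p \<rho>0 \<gamma> \<pi>ref s * (\<pi> s a * Adv p r \<gamma> \<pi>k s a))"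
      proof (intro sum.cong refl)
        fix a
        show "visit p \<rho>0 \<gamma> \<pi>ref s * \<pi>ref s a * (\<pi> s a / \<pi>ref s a * Adv p r \<gamma> \<pi>k s a)
          = visit p \<rho>0 \<gamma> \<pi>ref s * (\<pi> s a * Adv p r \<gamma> \<pi>k s a)"
          using supp vp by (cases "\<pi>ref s a = 0") auto
      qed
      then show ?thesis unfolding f_def by (simp add: sum_distrib_left)
    qed
    then have "(\<Sum>s\<in>UNIV. \<Sum>a\<in>UNIV. visit p \<rho>0 \<gamma> \<pi>ref s * \<pi>ref s a *
                 (\<pi> s a / \<pi>ref s a * Adv p r \<gamma> \<pi>k s a)) = (\<Sum>s\<in>UNIV. visit p \<rho>0 \<gamma> \<pi>ref s * f s)"
      by simp
    also have "\<dots> = (1 - \<gamma>) * (\<Sum>t. \<gamma>^t * FB t)"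
      unfolding FB_def sB_def by (rule visit_sum[OF kp pr dr g0 g1])
    finally show ?thesis using g1 by simp
  qed
  moreover have t3: "2 * \<gamma> * C_const p r \<gamma> \<pi> \<pi>k / (1 - \<gamma>)\<^sup>2 *
             (\<Sum>s\<in>UNIV. visit p \<rho>0 \<gamma> \<pi>ref s * TV \<pi> \<pi>ref s) = 2 * \<gamma> * C * E / (1 - \<gamma>)"
  proof -
    have "(\<Sum>s\<in>UNIV. visit p \<rho>0 \<gamma> \<pi>ref s * TV \<pi> \<pi>ref s) = (1 - \<gamma>) * E"
      unfolding E_def e_def sB_def by (rule visit_sum[OF kp pr dr g0 g1])
    then show ?thesis unfolding C_def using g1 by (simp add: power2_eq_square)
  qed
  ultimately show ?thesis by linarith
qed


end
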